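(* Let $Y_1,Y_2$ be real random variables with absolutely continuous distributions, c.d.f.'s $F_1,F_2$ and (unique) copula $C$ of $(Y_1,Y_2)$, and let $D$ be the set of all probability measures on $\mathbb R$. Put $\Delta(u)=F_1(u)+F_2(u)-2C(F_1(u),F_2(u))$, $u\in\mathbb R$. Then there exists $u^*\in\arg\max_{u\in\mathbb R}\Delta(u)$, and $$\max_{m\in D}E_m(Y_1,Y_2)=\Delta(u^* )=E_{\delta_{u^*}}(Y_1,Y_2),$$ i.e. the maximum over $D$ is attained at the Dirac measure $\delta_{u^*}$ (whose c.d.f. is $x\mapsto\mathbb 1\{u^*\le x\}$). If additionally $Y_1\stackrel{d}{=}Y_2$, then $$\max_{m\in D}E_m(Y_1,Y_2)=2\max_{x\in[0,1]}\big(x-C(x,x)\big),$$ and if $x^*\in(0,1)$ is a maximizer of $x\mapsto x-C(x,x)$ on $[0,1]$, the maximum is attained at $m=\delta_{u^*}$ with $u^*=F_1^{-1}(x^* )$.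
   Context: For a finite nonnegative measure $m$ on $\mathbb R$ and real random variables $Y_1,Y_2$, the excursion metric is $$E_m(Y_1,Y_2):=\int_{\mathbb R}\big(\mathbb P(Y_1>u)+\mathbb P(Y_2>u)-2\,\mathbb P(Y_1>u,Y_2>u)\big)\,m(du).$$ *)

theory Defs
  imports "HOL-Probability.Probability"
begin

definition rv_cdf :: "'a measure \<Rightarrow> ('a \<Rightarrow> real) \<Rightarrow> real \<Rightarrow> real" where
  "rv_cdf M Y u = measure M {\<omega> \<in> space M. Y \<omega> \<le> u}"

definition copula :: "(real \<Rightarrow> real \<Rightarrow> real) \<Rightarrow> bool" where
  "copula C \<longleftrightarrow>
     (\<forall>u\<in>{0..1}. C u 0 = 0 \<and> C 0 u = 0 \<and> C u 1 = u \<and> C 1 u = u) \<and>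
     (\<forall>u1 u2 v1 v2. 0 \<le> u1 \<and> u1 \<le> u2 \<and> u2 \<le> 1 \<and> 0 \<le> v1 \<and> v1 \<le> v2 \<and> v2 \<le> 1 \<longrightarrow>
        C u2 v2 - C u2 v1 - C u1 v2 + C u1 v1 \<ge> 0)"

definition copula_of :: "'a measure \<Rightarrow> ('a \<Rightarrow> real) \<Rightarrow> ('a \<Rightarrow> real) \<Rightarrow> (real \<Rightarrow> real \<Rightarrow> real) \<Rightarrow> bool" where
  "copula_of M Y1 Y2 C \<longleftrightarrow> copula C \<and>
     (\<forall>a b. measure M {\<omega> \<in> space M. Y1 \<omega> \<le> a \<and> Y2 \<omega> \<le> b}
             = C (rv_cdf M Y1 a) (rv_cdf M Y2 b))"

definition excursion_metric :: "'a measure \<Rightarrow> real measure \<Rightarrow> ('a \<Rightarrow> real) \<Rightarrow> ('a \<Rightarrow> real) \<Rightarrow> real" where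
  "excursion_metric M m Y1 Y2 =
     (\<integral>u. measure M {\<omega> \<in> space M. Y1 \<omega> > u} + measure M {\<omega> \<in> space M. Y2 \<omega> > u}
          - 2 * measure M {\<omega> \<in> space M. Y1 \<omega> > u \<and> Y2 \<omega> > u} \<partial>m)"

definition prob_measures_real :: "real measure set" where
  "prob_measures_real = {m. prob_space m \<and> sets m = sets borel}"

definition quantile :: "(real \<Rightarrow> real) \<Rightarrow> real \<Rightarrow> real" where
  "quantile F x = Inf {u. x \<le> F u}"

end

theory Submission
  imports Defs
begin



lemma cdf_facts:
  fixes X :: "'a \<Rightarrow> real"
  assumes P: "prob_space M" and X: "X \<in> borel_measurable M"
    and z: "\<And>x. measure M {\<omega>\<in>space M. X \<omega> = x} = 0"
  defines "G \<equiv> (\<lambda>u. measure M {\<omega>\<in>space M. X \<omega> \<le> u})"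
  shows "\<And>u. isCont G u" "(G \<longlongrightarrow> 0) at_bot" "(G \<longlongrightarrow> 1) at_top" "mono G"
proof -
  interpret prob_space M by fact
  let ?D = "distr M borel X"
  interpret D: real_distribution ?D using X by simp
  have GD: "G = cdf ?D"
  proof
    fix u show "G u = cdf ?D u"
      unfolding G_def cdf_def using X
      by (subst measure_distr) (auto intro!: arg_cong[where f="measure M"])
  qed
  show "\<And>u. isCont G u" unfolding GD
  proof -
    fix u
    have "measure ?D {u} = measure M {\<omega>\<in>space M. X \<omega> = u}" using X
      by (subst measure_distr) (auto intro!: arg_cong[where f="measure M"])
    then show "isCont (cdf ?D) u" using z D.isCont_cdf by simp
  qed
  show "(G \<longlongrightarrow> 0) at_bot" unfolding GD by (rule D.cdf_lim_at_bot)
  show "(G \<longlongrightarrow> 1) at_top" unfolding GD by (rule D.cdf_lim_at_top_prob)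
  show "mono G" unfolding GD by (auto intro!: monoI D.cdf_nondecreasing)
qed


lemma max_exists:
  fixes f :: "real \<Rightarrow> real"
  assumes c: "\<And>u. isCont f u" and b: "(f \<longlongrightarrow> 0) at_bot" and t: "(f \<longlongrightarrow> 0) at_top"
    and nn: "\<And>u. 0 \<le> f u"
  shows "\<exists>us. \<forall>u. f u \<le> f us"
proof (cases "\<exists>a. f a > 0")
  case False
  then show ?thesis using nn by (metis order.antisym not_less)
next
  case True
  then obtain a where a: "f a > 0" by blast
  have "eventually (\<lambda>x. f x < f a) at_top" using order_tendstoD(2)[OF t a] .
  then obtain R where R: "\<And>x. x \<ge> R \<Longrightarrow> f x < f a" by (auto simp: eventually_at_top_linorder)
  have "eventually (\<lambda>x. f x < f a) at_bot" using order_tendstoD(2)[OF b a] .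
  then obtain L where L: "\<And>x. x \<le> L \<Longrightarrow> f x < f a" by (auto simp: eventually_at_bot_linorder)
  let ?S = "{min L a..max R a}"
  have "continuous_on ?S f" using c by (simp add: continuous_at_imp_continuous_on)
  then obtain x where x: "x \<in> ?S" "\<And>y. y \<in> ?S \<Longrightarrow> f y \<le> f x"
    using continuous_attains_sup[of ?S f] by (metis atLeastAtMost_iff compact_Icc empty_iff max.cobounded2 min.cobounded2 order_trans)
  have fa: "f a \<le> f x" using x(2)[of a] by simp
  show ?thesis
  proof (intro exI allI)
    fix u
    show "f u \<le> f x"
    proof (cases "u \<in> ?S")
      case True then show ?thesis using x by simp
    next
      case False
      then have "u \<le> L \<or> u \<ge> R" by auto
      then show ?thesis using L R fa by (meson less_imp_le order_trans)
    qed
  qed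
qed

lemma ivt_cdf:
  fixes F :: "real \<Rightarrow> real"
  assumes c: "\<And>u. isCont F u" and m: "mono F" and b: "(F \<longlongrightarrow> 0) at_bot" and t: "(F \<longlongrightarrow> 1) at_top"
    and x: "0 < x" "x < 1"
  shows "F (quantile F x) = x"
proof -
  have "eventually (\<lambda>u. F u < x) at_bot" using order_tendstoD(2)[OF b x(1)] .
  then obtain a where a: "F a < x" by (auto simp: eventually_at_bot_linorder)
  have "eventually (\<lambda>u. F u > x) at_top" using order_tendstoD(1)[OF t x(2)] .
  then obtain b where bb: "F b > x" by (auto simp: eventually_at_top_linorder)
  define S where "S = {u. x \<le> F u}"
  have ne: "S \<noteq> {}" using bb unfolding S_def by (auto intro!: exI[of _ b])
  have lb: "\<And>u. u \<in> S \<Longrightarrow> a \<le> u"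
  proof (rule ccontr)
    fix u assume "u \<in> S" "\<not> a \<le> u"
    then have "F u \<le> F a" using m by (simp add: monoD)
    then show False using \<open>u \<in> S\<close> a unfolding S_def by simp
  qed
  have bdd: "bdd_below S" using lb by (rule bdd_belowI)
  have cl: "closed S" unfolding S_def
    by (rule closed_Collect_le) (auto simp: continuous_at_imp_continuous_on c)
  have qS: "Inf S \<in> S" using closed_contains_Inf[OF ne bdd cl] .
  have aq: "a \<le> Inf S" using lb qS .
  obtain c where cc: "a \<le> c" "c \<le> Inf S" "F c = x"
    using IVT[of F a x "Inf S"] a qS aq c unfolding S_def by auto
  have "c \<in> S" using cc unfolding S_def by simp
  then have "Inf S \<le> c" using bdd by (rule cInf_lower)
  then have "c = Inf S" using cc by simp
  then show ?thesis using cc unfolding quantile_def S_def by simp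
qed

theorem mainTheorem5:
  fixes M :: "'a measure" and Y1 Y2 :: "'a \<Rightarrow> real" and C :: "real \<Rightarrow> real \<Rightarrow> real"
  assumes "prob_space M"
    and "Y1 \<in> borel_measurable M" and "Y2 \<in> borel_measurable M"
    and "absolutely_continuous lborel (distr M lborel Y1)"
    and "absolutely_continuous lborel (distr M lborel Y2)"
    and "copula_of M Y1 Y2 C"
  defines "F1 \<equiv> rv_cdf M Y1" and "F2 \<equiv> rv_cdf M Y2"
  defines "\<Delta> \<equiv> (\<lambda>u. F1 u + F2 u - 2 * C (F1 u) (F2 u))"
  shows "(\<exists>us. \<forall>u. \<Delta> u \<le> \<Delta> us)
      \<and> (\<forall>us. (\<forall>u. \<Delta> u \<le> \<Delta> us) \<longrightarrow>
            (\<forall>m\<in>prob_measures_real. excursion_metric M m Y1 Y2 \<le> \<Delta> us)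
          \<and> return borel us \<in> prob_measures_real
          \<and> excursion_metric M (return borel us) Y1 Y2 = \<Delta> us)
      \<and> (distr M borel Y1 = distr M borel Y2 \<longrightarrow>
            (\<exists>x0\<in>{0..1}. \<forall>x\<in>{0..1}. x - C x x \<le> x0 - C x0 x0)
          \<and> (\<forall>x0\<in>{0..1}. (\<forall>x\<in>{0..1}. x - C x x \<le> x0 - C x0 x0) \<longrightarrow>
                (\<forall>m\<in>prob_measures_real. excursion_metric M m Y1 Y2 \<le> 2 * (x0 - C x0 x0))
              \<and> (\<exists>m\<in>prob_measures_real. excursion_metric M m Y1 Y2 = 2 * (x0 - C x0 x0)))
          \<and> (\<forall>xs\<in>{0<..<1}. (\<forall>x\<in>{0..1}. x - C x x \<le> xs - C xs xs) \<longrightarrow>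
                excursion_metric M (return borel (quantile F1 xs)) Y1 Y2 = 2 * (xs - C xs xs)))"
proof -
  interpret prob_space M by fact
  note [measurable] = assms(2,3)
  have zero: "measure M {\<omega>\<in>space M. Y \<omega> = x} = 0"
    if Y: "Y \<in> borel_measurable M" and ac: "absolutely_continuous lborel (distr M lborel Y)" for Y x
  proof -
    have "{x} \<in> null_sets lborel" by (rule finite_imp_null_set_lborel) simp
    then have "{x} \<in> null_sets (distr M lborel Y)" using ac unfolding absolutely_continuous_def by blast
    then have "emeasure (distr M lborel Y) {x} = 0" by auto
    then have "emeasure M (Y -` {x} \<inter> space M) = 0" using Y by (subst (asm) emeasure_distr) auto
    moreover have "Y -` {x} \<inter> space M = {\<omega>\<in>space M. Y \<omega> = x}" by auto
    ultimately show ?thesis by (simp add: measure_def)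
  qed
  have z1: "\<And>x. measure M {\<omega>\<in>space M. Y1 \<omega> = x} = 0" using zero assms(2,4) by blast
  have z2: "\<And>x. measure M {\<omega>\<in>space M. Y2 \<omega> = x} = 0" using zero assms(3,5) by blast
  define Z where "Z = (\<lambda>\<omega>. max (Y1 \<omega>) (Y2 \<omega>))"
  have Zm[measurable]: "Z \<in> borel_measurable M" unfolding Z_def by measurable
  have zZ: "measure M {\<omega>\<in>space M. Z \<omega> = x} = 0" for x
  proof -
    have "measure M {\<omega>\<in>space M. Z \<omega> = x} \<le> measure M ({\<omega>\<in>space M. Y1 \<omega> = x} \<union> {\<omega>\<in>space M. Y2 \<omega> = x})"
      by (rule finite_measure_mono) (auto simp: Z_def max_def)
    also have "\<dots> \<le> measure M {\<omega>\<in>space M. Y1 \<omega> = x} + measure M {\<omega>\<in>space M. Y2 \<omega> = x}"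
      by (rule measure_Un_le) auto
    finally show ?thesis using z1 z2 by (simp add: measure_nonneg order.antisym)
  qed
  define G where "G = (\<lambda>u. measure M {\<omega>\<in>space M. Z \<omega> \<le> u})"
  have F1d: "F1 = (\<lambda>u. measure M {\<omega>\<in>space M. Y1 \<omega> \<le> u})" unfolding F1_def rv_cdf_def by simp
  have F2d: "F2 = (\<lambda>u. measure M {\<omega>\<in>space M. Y2 \<omega> \<le> u})" unfolding F2_def rv_cdf_def by simp
  have Gd: "G u = measure M {\<omega>\<in>space M. Y1 \<omega> \<le> u \<and> Y2 \<omega> \<le> u}" for u
    unfolding G_def Z_def by simp
  note c1 = cdf_facts[OF assms(1) assms(2) z1, folded F1d]
  note c2 = cdf_facts[OF assms(1) assms(3) z2, folded F2d]
  note cG = cdf_facts[OF assms(1) Zm zZ, folded G_def]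
  have cop: "copula C" and Ceq: "\<And>a b. measure M {\<omega> \<in> space M. Y1 \<omega> \<le> a \<and> Y2 \<omega> \<le> b} = C (F1 a) (F2 b)"
    using assms(6) unfolding copula_of_def F1_def F2_def by auto
  have Deq: "\<Delta> u = F1 u + F2 u - 2 * G u" for u
    unfolding \<Delta>_def Gd Ceq by simp
  have GF1: "G u \<le> F1 u" for u unfolding Gd F1d by (rule finite_measure_mono) auto
  have GF2: "G u \<le> F2 u" for u unfolding Gd F2d by (rule finite_measure_mono) auto
  have Dnn: "0 \<le> \<Delta> u" for u using GF1[of u] GF2[of u] Deq[of u] by simp
  have Dle: "\<Delta> u \<le> 2" for u
  proof -
    have "F1 u \<le> 1" "F2 u \<le> 1" "0 \<le> G u" unfolding F1d F2d G_def by auto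
    then show ?thesis using Deq[of u] by simp
  qed
  have Dfun: "\<Delta> = (\<lambda>u. F1 u + F2 u - 2 * G u)" using Deq by auto
  have Dc: "isCont \<Delta> u" for u
  proof -
    have "isCont (\<lambda>u. F1 u + F2 u - 2 * G u) u"
      using c1(1) c2(1) cG(1) by (intro continuous_intros) auto
    then show ?thesis using Dfun by simp
  qed
  have Dbot: "(\<Delta> \<longlongrightarrow> 0) at_bot"
  proof -
    have "((\<lambda>u. F1 u + F2 u - 2 * G u) \<longlongrightarrow> 0 + 0 - 2 * 0) at_bot"
      using c1(2) c2(2) cG(2) by (intro tendsto_intros) auto
    then show ?thesis using Dfun by simp
  qed
  have Dtop: "(\<Delta> \<longlongrightarrow> 0) at_top"
  proof -
    have "((\<lambda>u. F1 u + F2 u - 2 * G u) \<longlongrightarrow> 1 + 1 - 2 * 1) at_top"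
      using c1(3) c2(3) cG(3) by (intro tendsto_intros) auto
    then show ?thesis using Dfun by simp
  qed
  have Dmeas: "\<Delta> \<in> borel_measurable borel"
    by (rule borel_measurable_continuous_onI) (simp add: Dc continuous_at_imp_continuous_on)
  have integrand: "(\<lambda>u. measure M {\<omega> \<in> space M. Y1 \<omega> > u} + measure M {\<omega> \<in> space M. Y2 \<omega> > u}
          - 2 * measure M {\<omega> \<in> space M. Y1 \<omega> > u \<and> Y2 \<omega> > u}) = \<Delta>"
  proof
    fix u
    let ?A = "{\<omega>\<in>space M. Y1 \<omega> \<le> u}" and ?B = "{\<omega>\<in>space M. Y2 \<omega> \<le> u}"
    have A: "?A \<in> sets M" and B: "?B \<in> sets M" by measurable
    have e1: "{\<omega> \<in> space M. Y1 \<omega> > u} = space M - ?A" by auto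
    have e2: "{\<omega> \<in> space M. Y2 \<omega> > u} = space M - ?B" by auto
    have e3: "{\<omega> \<in> space M. Y1 \<omega> > u \<and> Y2 \<omega> > u} = space M - (?A \<union> ?B)" by auto
    have e4: "?B \<inter> ?A = {\<omega>\<in>space M. Y1 \<omega> \<le> u \<and> Y2 \<omega> \<le> u}" by auto
    have "measure M (?A \<union> ?B) = measure M ?A + measure M (?B - ?A)"
      using A B by (rule finite_measure_Union')
    also have "measure M (?B - ?A) = measure M ?B - G u"
      using B A by (subst finite_measure_Diff') (auto simp: e4 Gd)
    finally have U: "measure M (?A \<union> ?B) = F1 u + F2 u - G u" unfolding F1d F2d by simp
    show "measure M {\<omega> \<in> space M. Y1 \<omega> > u} + measure M {\<omega> \<in> space M. Y2 \<omega> > u}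
          - 2 * measure M {\<omega> \<in> space M. Y1 \<omega> > u \<and> Y2 \<omega> > u} = \<Delta> u"
      unfolding e1 e2 e3 using A B U Deq[of u]
      by (simp add: prob_compl F1d F2d)
  qed
  have EM: "excursion_metric M m Y1 Y2 = integral\<^sup>L m \<Delta>" for m
    unfolding excursion_metric_def integrand ..
  have bound: "excursion_metric M m Y1 Y2 \<le> \<Delta> us" if m: "m \<in> prob_measures_real" and us: "\<forall>u. \<Delta> u \<le> \<Delta> us" for m us
  proof -
    have pm: "prob_space m" and sm: "sets m = sets borel" using m unfolding prob_measures_real_def by auto
    have meas: "\<Delta> \<in> borel_measurable m" by (subst measurable_cong_sets[OF sm refl]) (rule Dmeas)
    have int: "integrable m \<Delta>"
      using pm meas Dle Dnn
      by (intro finite_measure.integrable_const_bound[where B=2]) (auto simp: prob_space_def)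
    have "integral\<^sup>L m \<Delta> \<le> integral\<^sup>L m (\<lambda>_. \<Delta> us)"
      using int pm us by (intro integral_mono) (auto simp: prob_space_def finite_measure.integrable_const)
    also have "\<dots> = \<Delta> us" using pm by (simp add: prob_space.prob_space)
    finally show ?thesis unfolding EM .
  qed
  have ret: "return borel us \<in> prob_measures_real" for us
    unfolding prob_measures_real_def by (auto intro: prob_space_return)
  have Eret: "excursion_metric M (return borel us) Y1 Y2 = \<Delta> us" for us
    unfolding EM using Dmeas by (simp add: integral_return)
  obtain us where us: "\<forall>u. \<Delta> u \<le> \<Delta> us" using max_exists[OF Dc Dbot Dtop Dnn] by blast
  have part12: "(\<exists>us. \<forall>u. \<Delta> u \<le> \<Delta> us)
      \<and> (\<forall>us. (\<forall>u. \<Delta> u \<le> \<Delta> us) \<longrightarrow>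
            (\<forall>m\<in>prob_measures_real. excursion_metric M m Y1 Y2 \<le> \<Delta> us)
          \<and> return borel us \<in> prob_measures_real
          \<and> excursion_metric M (return borel us) Y1 Y2 = \<Delta> us)"
    using us bound ret Eret by blast
  have part3: "(\<exists>x0\<in>{0..1}. \<forall>x\<in>{0..1}. x - C x x \<le> x0 - C x0 x0)
          \<and> (\<forall>x0\<in>{0..1}. (\<forall>x\<in>{0..1}. x - C x x \<le> x0 - C x0 x0) \<longrightarrow>
                (\<forall>m\<in>prob_measures_real. excursion_metric M m Y1 Y2 \<le> 2 * (x0 - C x0 x0))
              \<and> (\<exists>m\<in>prob_measures_real. excursion_metric M m Y1 Y2 = 2 * (x0 - C x0 x0)))
          \<and> (\<forall>xs\<in>{0<..<1}. (\<forall>x\<in>{0..1}. x - C x x \<le> xs - C xs xs) \<longrightarrow>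
                excursion_metric M (return borel (quantile F1 xs)) Y1 Y2 = 2 * (xs - C xs xs))"
    if deq: "distr M borel Y1 = distr M borel Y2"
  proof -
    have "F1 u = F2 u" for u
    proof -
      have "F1 u = measure (distr M borel Y1) {..u}" unfolding F1d
        by (subst measure_distr) (auto intro!: arg_cong[where f="measure M"])
      also have "\<dots> = measure (distr M borel Y2) {..u}" using deq by simp
      also have "\<dots> = F2 u" unfolding F2d
        by (subst measure_distr) (auto intro!: arg_cong[where f="measure M"])
      finally show ?thesis .
    qed
    then have FF: "F2 = F1" by auto
    define h where "h = (\<lambda>x::real. x - C x x)"
    have Dh: "\<Delta> u = 2 * h (F1 u)" for u unfolding \<Delta>_def h_def FF by simp
    have F01: "F1 u \<in> {0..1}" for u unfolding F1d by auto
    have h0: "h 0 = 0" "h 1 = 0" using cop unfolding copula_def h_def by auto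
    have hmax: "h x \<le> h (F1 us)" if x: "x \<in> {0..1}" for x
    proof -
      have nn: "0 \<le> h (F1 us)" using Dnn[of us] Dh[of us] by simp
      consider "x = 0" | "x = 1" | "0 < x \<and> x < 1" using x by fastforce
      then show ?thesis
      proof cases
        case 3
        then have "F1 (quantile F1 x) = x" using ivt_cdf[OF c1(1) c1(4) c1(2) c1(3)] by auto
        then show ?thesis using us Dh by (metis mult_le_cancel_left_pos zero_less_numeral)
      qed (use h0 nn in auto)
    qed
    show ?thesis
    proof (intro conjI ballI impI)
      show "\<exists>x0\<in>{0..1}. \<forall>x\<in>{0..1}. x - C x x \<le> x0 - C x0 x0"
        using F01 hmax unfolding h_def by blast
    next
      fix x0 m assume x0: "x0 \<in> {0..1}" and mx: "\<forall>x\<in>{0..1}. x - C x x \<le> x0 - C x0 x0" and m: "m \<in> prob_measures_real"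
      have "excursion_metric M m Y1 Y2 \<le> \<Delta> us" using bound m us by blast
      also have "\<dots> \<le> 2 * (x0 - C x0 x0)" proof -
        have "F1 us - C (F1 us) (F1 us) \<le> x0 - C x0 x0" using mx F01[of us] by blast
        then show ?thesis using Dh[of us] unfolding h_def by simp
      qed
      finally show "excursion_metric M m Y1 Y2 \<le> 2 * (x0 - C x0 x0)" .
    next
      fix x0 assume x0: "x0 \<in> {0..1}" and mx: "\<forall>x\<in>{0..1}. x - C x x \<le> x0 - C x0 x0"
      have "h x0 = h (F1 us)" using hmax[OF x0] mx F01[of us] unfolding h_def by force
      then have "excursion_metric M (return borel us) Y1 Y2 = 2 * (x0 - C x0 x0)"
        using Eret Dh unfolding h_def by simp
      then show "\<exists>m\<in>prob_measures_real. excursion_metric M m Y1 Y2 = 2 * (x0 - C x0 x0)"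
        using ret by blast
    next
      fix xs :: real assume xs: "xs \<in> {0<..<1}"
      then have "F1 (quantile F1 xs) = xs" using ivt_cdf[OF c1(1) c1(4) c1(2) c1(3)] by auto
      then show "excursion_metric M (return borel (quantile F1 xs)) Y1 Y2 = 2 * (xs - C xs xs)"
        using Eret Dh unfolding h_def by simp
    qed
  qed
  show ?thesis using part12 part3 by blast
qed

end
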